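(* For every integer $n\geq 2$ there exists a balanced bipartite graph $\mathcal{B}$ on $2n$ vertices with $\delta(\mathcal{B})=\lceil \frac{n}{2}\rceil$ and $f(\mathcal{B})=n+2$.
   Context: All graphs are finite and simple. A balanced bipartite graph on $2n$ vertices is a bipartite graph with a given bipartition $(V_1,V_2)$ where $|V_1|=|V_2|=n$. $\delta(G)$ denotes the minimum degree of $G$. The forest number $f(G)$ is the maximum cardinality of a subset $S\subseteq V(G)$ such that the induced subgraph $G[S]$ is a forest. *)

theory Defs
  imports Complex_Main
begin

definition simple_graph :: "'a set \<Rightarrow> ('a \<Rightarrow> 'a \<Rightarrow> bool) \<Rightarrow> bool" where
  "simple_graph V E \<longleftrightarrow> finite V \<and> (\<forall>u v. E u v \<longrightarrow> u \<in> V \<and> v \<in> V)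
     \<and> (\<forall>u v. E u v \<longrightarrow> E v u) \<and> (\<forall>v. \<not> E v v)"

definition balanced_bipartite :: "nat \<Rightarrow> 'a set \<Rightarrow> 'a set \<Rightarrow> ('a \<Rightarrow> 'a \<Rightarrow> bool) \<Rightarrow> bool" where
  "balanced_bipartite n V1 V2 E \<longleftrightarrow> simple_graph (V1 \<union> V2) E \<and> V1 \<inter> V2 = {}
     \<and> card V1 = n \<and> card V2 = n
     \<and> (\<forall>u v. E u v \<longrightarrow> (u \<in> V1 \<and> v \<in> V2) \<or> (u \<in> V2 \<and> v \<in> V1))"

definition degree :: "'a set \<Rightarrow> ('a \<Rightarrow> 'a \<Rightarrow> bool) \<Rightarrow> 'a \<Rightarrow> nat" where
  "degree V E v = card {u \<in> V. E v u}"

definition min_degree :: "'a set \<Rightarrow> ('a \<Rightarrow> 'a \<Rightarrow> bool) \<Rightarrow> nat" where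
  "min_degree V E = Min (degree V E ` V)"

definition is_cycle :: "'a set \<Rightarrow> ('a \<Rightarrow> 'a \<Rightarrow> bool) \<Rightarrow> 'a list \<Rightarrow> bool" where
  "is_cycle S E cs \<longleftrightarrow> length cs \<ge> 3 \<and> distinct cs \<and> set cs \<subseteq> S
     \<and> (\<forall>i. Suc i < length cs \<longrightarrow> E (cs ! i) (cs ! Suc i))
     \<and> E (last cs) (hd cs)"

definition induces_forest :: "'a set \<Rightarrow> ('a \<Rightarrow> 'a \<Rightarrow> bool) \<Rightarrow> 'a set \<Rightarrow> bool" where
  "induces_forest V E S \<longleftrightarrow> S \<subseteq> V \<and> \<not> (\<exists>cs. is_cycle S E cs)"

definition forest_number :: "'a set \<Rightarrow> ('a \<Rightarrow> 'a \<Rightarrow> bool) \<Rightarrow> nat" where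
  "forest_number V E = Max (card ` {S. induces_forest V E S})"

end

theory Submission
  imports Defs
begin

definition E0 :: "nat \<Rightarrow> nat \<Rightarrow> bool \<Rightarrow> nat \<Rightarrow> nat \<Rightarrow> bool" where
  "E0 n k b u v \<longleftrightarrow> u < n \<and> n \<le> v \<and> v < 2*n \<and>
     ((u < k \<and> v < n+k) \<or> (k \<le> u \<and> n+k \<le> v) \<or> (b \<and> u = 0 \<and> n+k \<le> v) \<or> (b \<and> k \<le> u \<and> v = n))"

definition G :: "nat \<Rightarrow> nat \<Rightarrow> bool \<Rightarrow> nat \<Rightarrow> nat \<Rightarrow> bool" where
  "G n k b u v \<longleftrightarrow> E0 n k b u v \<or> E0 n k b v u"

lemma two_elems:
  assumes "finite A" "2 \<le> card A"
  obtains a a' where "a \<in> A" "a' \<in> A" "a \<noteq> a'"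
proof -
  from assms have "A \<noteq> {}" by auto
  then obtain a where a: "a \<in> A" by auto
  have "card (A - {a}) \<ge> 1" using assms a by simp
  then have "A - {a} \<noteq> {}" by (metis card.empty not_one_le_zero)
  then obtain a' where "a' \<in> A - {a}" by auto
  then show ?thesis using that a by auto
qed

lemma cycle_two_nbrs:
  assumes c: "is_cycle S E cs" and sym: "\<And>a b. E a b \<Longrightarrow> E b a" and v: "v \<in> set cs"
  shows "\<exists>u w. u \<in> set cs \<and> w \<in> set cs \<and> u \<noteq> w \<and> E v u \<and> E v w"
proof -
  let ?L = "length cs"
  have L: "?L \<ge> 3" and d: "distinct cs" and st: "\<And>i. Suc i < ?L \<Longrightarrow> E (cs ! i) (cs ! Suc i)"
    and lh: "E (last cs) (hd cs)" using c unfolding is_cycle_def by auto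
  have ne: "cs \<noteq> []" using L by auto
  have lst: "last cs = cs ! (?L - 1)" using ne by (simp add: last_conv_nth)
  have hdd: "hd cs = cs ! 0" using ne by (simp add: hd_conv_nth)
  obtain i where i: "i < ?L" "v = cs ! i" using v by (auto simp: in_set_conv_nth)
  define j where "j = (if Suc i < ?L then Suc i else 0)"
  define h where "h = (if 0 < i then i - 1 else ?L - 1)"
  have j: "j < ?L" and h: "h < ?L" using i L unfolding j_def h_def by auto
  have Ej: "E v (cs ! j)"
  proof (cases "Suc i < ?L")
    case True then show ?thesis using st i unfolding j_def by auto
  next
    case False then have "i = ?L - 1" using i by auto
    then show ?thesis using lh lst hdd i False unfolding j_def by auto
  qed
  have Eh: "E v (cs ! h)"
  proof (cases "0 < i")
    case True then have "Suc (i-1) < ?L" "Suc (i-1) = i" using i by auto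
    then have "E (cs ! (i-1)) (cs ! Suc (i-1))" using st by blast
    then show ?thesis using True i sym unfolding h_def by auto
  next
    case False then show ?thesis using lh lst hdd i sym unfolding h_def by auto
  qed
  have "j \<noteq> h" using i L unfolding j_def h_def by auto
  then have "cs ! j \<noteq> cs ! h" using d j h by (simp add: nth_eq_iff_index_eq)
  then show ?thesis using Ej Eh j h by (metis nth_mem)
qed

lemma cycle_excl:
  assumes c: "is_cycle S E cs" and sym: "\<And>a b. E a b \<Longrightarrow> E b a"
    and T: "set cs \<subseteq> T" and uq: "\<And>u w. u \<in> T \<Longrightarrow> w \<in> T \<Longrightarrow> E v u \<Longrightarrow> E v w \<Longrightarrow> u = w"
  shows "v \<notin> set cs"
  using cycle_two_nbrs[OF c sym] T uq by blast

lemma block_bound: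
  assumes fS: "finite S" and AB: "A \<inter> B = {}" and fA: "finite A" and fB: "finite B"
    and cA: "card A \<le> t" and cB: "card B \<le> t"
    and comp: "\<And>a c. a \<in> A \<Longrightarrow> c \<in> B \<Longrightarrow> E a c \<and> E c a"
    and nc: "\<not> (\<exists>cs. is_cycle S E cs)"
  shows "card (S \<inter> (A \<union> B)) \<le> t + 1"
proof -
  have eq: "S \<inter> (A \<union> B) = (S \<inter> A) \<union> (S \<inter> B)" by auto
  have cu: "card (S \<inter> (A \<union> B)) = card (S \<inter> A) + card (S \<inter> B)"
    unfolding eq using AB fS by (intro card_Un_disjoint) auto
  have a1: "card (S \<inter> A) \<le> t" using cA fA by (meson card_mono inf_le2 le_trans)
  have b1: "card (S \<inter> B) \<le> t" using cB fB by (meson card_mono inf_le2 le_trans)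
  show ?thesis
  proof (rule ccontr)
    assume "\<not> ?thesis"
    then have "2 \<le> card (S \<inter> A)" "2 \<le> card (S \<inter> B)" using cu a1 b1 by auto
    then obtain a a' c c' where "a \<in> S \<inter> A" "a' \<in> S \<inter> A" "a \<noteq> a'"
      "c \<in> S \<inter> B" "c' \<in> S \<inter> B" "c \<noteq> c'"
      using two_elems fS by (metis finite_Int)
    moreover have "a \<noteq> c" "a \<noteq> c'" "a' \<noteq> c" "a' \<noteq> c'" using calculation AB by auto
    ultimately have "is_cycle S E [a, c, a', c']"
      unfolding is_cycle_def using comp
      by (auto simp: less_Suc_eq nth_Cons split: nat.split)
    then show False using nc by blast
  qed
qed

lemma ceil_half: "nat \<lceil>real n / 2\<rceil> = (n+1) div 2"
  by linarith

theorem proposition2p2: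
  fixes n :: nat
  assumes "n \<ge> 2"
  shows "\<exists>(V1 :: nat set) V2 E. balanced_bipartite n V1 V2 E
           \<and> min_degree (V1 \<union> V2) E = nat \<lceil>real n / 2\<rceil>
           \<and> forest_number (V1 \<union> V2) E = n + 2"
proof -
  define k where "k = (n+1) div 2"
  define b where "b = odd n"
  define E where "E = G n k b"
  have k1: "1 \<le> k" "k < n" "k \<le> n - k + 1" using assms unfolding k_def by presburger+
  have kb: "b \<Longrightarrow> 2 \<le> k" "b \<Longrightarrow> k \<le> n - k + 1" "\<not> b \<Longrightarrow> n = 2*k"
    using assms unfolding k_def b_def by presburger+
  have V: "{..<n} \<union> {n..<2*n} = {..<2*n}" by auto
  have sym: "\<And>u v. E u v \<Longrightarrow> E v u" unfolding E_def G_def by auto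
  have Ein: "\<And>u v. E u v \<Longrightarrow> u < 2*n \<and> v < 2*n" unfolding E_def G_def E0_def by auto
  have irr: "\<And>v. \<not> E v v" unfolding E_def G_def E0_def by auto
  have bip: "\<And>u v. E u v \<Longrightarrow> (u \<in> {..<n} \<and> v \<in> {n..<2*n}) \<or> (u \<in> {n..<2*n} \<and> v \<in> {..<n})"
    unfolding E_def G_def E0_def by auto
  have bb: "balanced_bipartite n {..<n} {n..<2*n} E"
    unfolding balanced_bipartite_def simple_graph_def V
  proof (intro conjI allI impI)
    show "finite {..<2*n}" by simp
    show "{..<n} \<inter> {n..<2*n} = {}" by auto
    show "card {..<n} = n" by simp
    show "card {n..<2*n} = n" by simp
  qed (use sym Ein irr bip in blast)+
  have deg: "min_degree {..<2*n} E = k"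
  proof -
    have lb: "k \<le> degree {..<2*n} E v" if v: "v < 2*n" for v
    proof -
      have f: "finite {u \<in> {..<2*n}. E v u}" by auto
      have "\<exists>N. N \<subseteq> {u \<in> {..<2*n}. E v u} \<and> k \<le> card N"
      proof (cases "v < k")
        case True have "{n..<n+k} \<subseteq> {u \<in> {..<2*n}. E v u}"
            using True k1 v by (intro subsetI) (auto simp: E_def G_def E0_def)
          moreover have "k \<le> card ({n..<n+k})" using k1 v by simp
          ultimately show ?thesis by blast
      next
        case F1: False show ?thesis
        proof (cases "v < n")
          case True show ?thesis
          proof (cases b)
            case b: True
            have "n \<notin> {n+k..<2*n}" using k1 by auto
            then have ci: "card (insert n {n+k..<2*n}) = n - k + 1" by simp
            have "insert n {n+k..<2*n} \<subseteq> {u \<in> {..<2*n}. E v u}"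
                using b True F1 kb k1 by (intro subsetI) (auto simp: E_def G_def E0_def)
              moreover have "k \<le> card (insert n {n+k..<2*n})" using ci b True F1 kb k1 by simp
              ultimately show ?thesis by blast
          next
            case b: False have "{n+k..<2*n} \<subseteq> {u \<in> {..<2*n}. E v u}"
                using b True F1 kb k1 by (intro subsetI) (auto simp: E_def G_def E0_def)
              moreover have "k \<le> card ({n+k..<2*n})" using b True F1 kb k1 by simp
              ultimately show ?thesis by blast
          qed
        next
          case F2: False show ?thesis
          proof (cases "v < n + k")
            case True have "{..<k} \<subseteq> {u \<in> {..<2*n}. E v u}"
                using True F2 v k1 by (intro subsetI) (auto simp: E_def G_def E0_def)
              moreover have "k \<le> card ({..<k})" using F2 v k1 by simp
              ultimately show ?thesis by blast
          next
            case F3: False show ?thesis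
            proof (cases b)
              case b: True
              have "0 \<notin> {k..<n}" using k1 by auto
              then have ci: "card (insert 0 {k..<n}) = n - k + 1" by simp
              have "insert 0 {k..<n} \<subseteq> {u \<in> {..<2*n}. E v u}"
                  using b F3 v kb k1 by (intro subsetI) (auto simp: E_def G_def E0_def)
                moreover have "k \<le> card (insert 0 {k..<n})" using ci b F3 v kb k1 by simp
                ultimately show ?thesis by blast
            next
              case b: False have "{k..<n} \<subseteq> {u \<in> {..<2*n}. E v u}"
                  using b F3 v kb k1 by (intro subsetI) (auto simp: E_def G_def E0_def)
                moreover have "k \<le> card ({k..<n})" using b F3 v kb k1 by simp
                ultimately show ?thesis by blast
            qed
          qed
        qed
      qed
      then obtain N where "N \<subseteq> {u \<in> {..<2*n}. E v u}" "k \<le> card N" by blast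
      then show ?thesis unfolding degree_def using f card_mono le_trans by blast
    qed
    have w: "{u \<in> {..<2*n}. E (k-1) u} = {n..<n+k}"
    proof (intro equalityI subsetI)
      fix u assume "u \<in> {u \<in> {..<2*n}. E (k-1) u}"
      then have "E0 n k b (k-1) u \<or> E0 n k b u (k-1)" by (simp add: E_def G_def)
      then show "u \<in> {n..<n+k}" using k1 kb unfolding E0_def by (cases b) auto
    next
      fix u assume "u \<in> {n..<n+k}"
      then show "u \<in> {u \<in> {..<2*n}. E (k-1) u}" using k1 by (auto simp: E_def G_def E0_def)
    qed
    have wd: "degree {..<2*n} E (k-1) = k" unfolding degree_def w by simp
    show ?thesis unfolding min_degree_def
    proof (rule Min_eqI)
      show "finite (degree {..<2 * n} E ` {..<2 * n})" by auto
      show "\<And>y. y \<in> degree {..<2 * n} E ` {..<2 * n} \<Longrightarrow> k \<le> y" using lb by auto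
      show "k \<in> degree {..<2 * n} E ` {..<2 * n}"
      proof (rule image_eqI[where x="k-1"])
        show "k = degree {..<2*n} E (k-1)" using wd by simp
        show "k - 1 \<in> {..<2*n}" using k1 by simp
      qed
    qed
  qed
  have fn: "forest_number {..<2*n} E = n + 2"
  proof -
    define y where "y = n + k - 1"
    define y2 where "y2 = n + k"
    define S where "S = {..<n} \<union> {y, y2}"
    have Sc: "card S = n + 2" unfolding S_def y_def y2_def using k1 by (auto simp: card_insert_if)
    have Sf: "induces_forest {..<2*n} E S"
      unfolding induces_forest_def
    proof
      show "S \<subseteq> {..<2*n}" unfolding S_def y_def y2_def using k1 by auto
      show "\<not> (\<exists>cs. is_cycle S E cs)"
      proof
        assume "\<exists>cs. is_cycle S E cs"
        then obtain cs where c: "is_cycle S E cs" by blast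
        have s0: "set cs \<subseteq> S" using c unfolding is_cycle_def by auto
        have s1: "set cs \<subseteq> {0, y, y2}"
        proof
          fix v assume vin: "v \<in> set cs"
          show "v \<in> {0, y, y2}"
          proof (rule ccontr)
            assume nv: "v \<notin> {0, y, y2}"
            then have "v < n" using vin s0 unfolding S_def by auto
            have "v \<notin> set cs"
            proof (rule cycle_excl[OF c sym s0])
              fix u w assume "u \<in> S" "w \<in> S" "E v u" "E v w"
              then show "u = w" using nv \<open>v < n\<close> k1 kb
                unfolding S_def y_def y2_def E_def G_def E0_def by (cases b) auto
            qed
            then show False using vin by simp
          qed
        qed
        have "y \<notin> set cs"
        proof (rule cycle_excl[OF c sym s1])
          fix u w assume "u \<in> {0, y, y2}" "w \<in> {0, y, y2}" "E y u" "E y w"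
          then show "u = w" using k1 kb
            unfolding y_def y2_def E_def G_def E0_def by auto
        qed
        then have "set cs \<subseteq> {0, y2}" using s1 by auto
        moreover have "card {0::nat, y2} \<le> 2" by (simp add: card_insert_if)
        ultimately have "card (set cs) \<le> 2" by (meson card_mono finite.emptyI finite.insertI le_trans)
        moreover have "card (set cs) = length cs" "length cs \<ge> 3"
          using c unfolding is_cycle_def by (auto simp: distinct_card)
        ultimately show False by simp
      qed
    qed
    have ub: "card T \<le> n + 2" if T: "induces_forest {..<2*n} E T" for T
    proof -
      have Ts: "T \<subseteq> {..<2*n}" and nc: "\<not> (\<exists>cs. is_cycle T E cs)"
        using T unfolding induces_forest_def by auto
      have fT: "finite T" using Ts finite_subset by blast
      have b1: "card (T \<inter> ({..<k} \<union> {n..<n+k})) \<le> k + 1"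
        using k1 by (intro block_bound[OF fT _ _ _ _ _ _ nc]) (auto simp: E_def G_def E0_def)
      have b2: "card (T \<inter> ({k..<n} \<union> {n+k..<2*n})) \<le> (n - k) + 1"
        using k1 by (intro block_bound[OF fT _ _ _ _ _ _ nc]) (auto simp: E_def G_def E0_def)
      have "T = (T \<inter> ({..<k} \<union> {n..<n+k})) \<union> (T \<inter> ({k..<n} \<union> {n+k..<2*n}))"
        using Ts by auto
      then have "card T \<le> card (T \<inter> ({..<k} \<union> {n..<n+k})) + card (T \<inter> ({k..<n} \<union> {n+k..<2*n}))"
        by (metis card_Un_le)
      then show ?thesis using b1 b2 k1 by linarith
    qed
    have fin: "finite {S. induces_forest {..<2*n} E S}"
      by (rule finite_subset[of _ "Pow {..<2*n}"]) (auto simp: induces_forest_def)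
    show ?thesis unfolding forest_number_def
    proof (rule Max_eqI)
      show "finite (card ` {S. induces_forest {..<2*n} E S})" using fin by simp
      show "\<And>y. y \<in> card ` {S. induces_forest {..<2*n} E S} \<Longrightarrow> y \<le> n + 2" using ub by auto
      show "n + 2 \<in> card ` {S. induces_forest {..<2*n} E S}" using Sf Sc by (metis image_eqI mem_Collect_eq)
    qed
  qed
  show ?thesis
    apply (rule exI[of _ "{..<n}"], rule exI[of _ "{n..<2*n}"], rule exI[of _ E])
    using bb deg fn V ceil_half k_def by simp
qed

end
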